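(* Let $PC_n^1$ be the polyomino chain with $n$ squares and exactly two segments $s_1,s_2$ with lengths $l_1=2$ and $l_2=n-1$. Then $ZC_1(PC_n^1)=32n-30-2I_{\{n=4\}}$ for $n\ge 4$, and $ZC_2(PC_n^1)=48n-58-I_{\{n=5\}}$ for $n\ge 5$.
   Context: A polyomino chain with $n$ squares is a sequence of $n$ unit squares in the plane in which consecutive squares share exactly one edge and the centers of consecutive squares form a path; it is regarded as the graph whose vertices are the corners of the squares and whose edges are the sides of the squares. A square is terminal if it has exactly one adjacent square, kink if it has two adjacent squares and contains a vertex of degree 2. A segment is a maximal linear (straight) subchain, including the kink and/or terminal squares at its ends; consecutive segments share a kink square, and the length of a segment is its number of squares. For a vertex $v$, $\tau_v$ is the number of vertices at distance exactly $2$ from $v$; $ZC_1(G)=\sum_{v\in V(G)}\tau_v^2$ and $ZC_2(G)=\sum_{uv\in E(G)}\tau_u\tau_v$. $I_{\{A\}}$ is the indicator of condition $A$. *)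

theory Defs
  imports Main
begin

type_synonym pt = "int \<times> int"

text \<open>A unit square is identified with its lower-left corner p = (a,b);
  its corners are (a,b),(a+1,b),(a+1,b+1),(a,b+1) and its sides are the four
  unit segments between consecutive corners (edges are 2-element sets).\<close>

definition sq_corners :: "pt \<Rightarrow> pt set" where
  "sq_corners p = (case p of (a,b) \<Rightarrow> {(a,b),(a+1,b),(a+1,b+1),(a,b+1)})"

definition sq_sides :: "pt \<Rightarrow> pt set set" where
  "sq_sides p = (case p of (a,b) \<Rightarrow>
     {{(a,b),(a+1,b)}, {(a+1,b),(a+1,b+1)}, {(a+1,b+1),(a,b+1)}, {(a,b+1),(a,b)}})"

definition chain_V :: "(nat \<Rightarrow> pt) \<Rightarrow> nat \<Rightarrow> pt set" where
  "chain_V c n = (\<Union>i<n. sq_corners (c i))"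

definition chain_E :: "(nat \<Rightarrow> pt) \<Rightarrow> nat \<Rightarrow> pt set set" where
  "chain_E c n = (\<Union>i<n. sq_sides (c i))"

definition adj_rel :: "pt set set \<Rightarrow> (pt \<times> pt) set" where
  "adj_rel E = {(u,v). {u,v} \<in> E \<and> u \<noteq> v}"

definition gdist :: "pt set set \<Rightarrow> pt \<Rightarrow> pt \<Rightarrow> nat" where
  "gdist E u v = (LEAST k. (u,v) \<in> (adj_rel E) ^^ k)"

definition tau :: "pt set \<Rightarrow> pt set set \<Rightarrow> pt \<Rightarrow> nat" where
  "tau V E v = card {w \<in> V. (v,w) \<in> (adj_rel E)\<^sup>* \<and> gdist E v w = 2}"

definition ZC1 :: "pt set \<Rightarrow> pt set set \<Rightarrow> nat" where
  "ZC1 V E = (\<Sum>v\<in>V. (tau V E v)^2)"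

definition ZC2 :: "pt set \<Rightarrow> pt set set \<Rightarrow> nat" where
  "ZC2 V E = (\<Sum>e\<in>E. \<Prod>v\<in>e. tau V E v)"

definition step_dir :: "(nat \<Rightarrow> pt) \<Rightarrow> nat \<Rightarrow> pt" where
  "step_dir c i = (fst (c (Suc i)) - fst (c i), snd (c (Suc i)) - snd (c i))"

text \<open>c 0, ..., c (n-1) is a polyomino chain with exactly two segments, of lengths
  2 (squares 0,1) and n-1 (squares 1,...,n-1): consecutive squares share an edge
  (unit step between corners), the squares are distinct, the direction changes at
  square 1 (a kink) and is constant afterwards.\<close>
definition is_PC1 :: "(nat \<Rightarrow> pt) \<Rightarrow> nat \<Rightarrow> bool" where
  "is_PC1 c n \<longleftrightarrow> n \<ge> 3 \<and> inj_on c {..<n}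
     \<and> (\<forall>i. Suc i < n \<longrightarrow> step_dir c i \<in> {(1,0),(-1,0),(0,1),(0,-1)})
     \<and> step_dir c 1 \<noteq> step_dir c 0
     \<and> (\<forall>i. 1 \<le> i \<and> Suc i < n \<longrightarrow> step_dir c i = step_dir c 1)"

end

theory Submission
  imports Defs
begin

lemma relpow2_iff: "(v,w) \<in> R ^^ 2 \<longleftrightarrow> (\<exists>u. (v,u) \<in> R \<and> (u,w) \<in> R)"
  by (auto simp: numeral_2_eq_2)

definition D2 :: "pt set \<Rightarrow> pt set set \<Rightarrow> pt \<Rightarrow> pt set" where
  "D2 V E v = {w\<in>V. w \<noteq> v \<and> (v,w) \<notin> adj_rel E \<and> (\<exists>u. (v,u) \<in> adj_rel E \<and> (u,w) \<in> adj_rel E)}"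

lemma tau_D2: "tau V E v = card (D2 V E v)"
proof -
  let ?A = "adj_rel E"
  have "{w \<in> V. (v,w) \<in> ?A\<^sup>* \<and> gdist E v w = 2} = D2 V E v"
  proof (intro set_eqI iffI)
    fix w assume "w \<in> {w \<in> V. (v,w) \<in> ?A\<^sup>* \<and> gdist E v w = 2}"
    then have w: "w \<in> V" "(v,w) \<in> ?A\<^sup>*" "gdist E v w = 2" by auto
    then obtain k where k: "(v,w) \<in> ?A ^^ k" using rtrancl_power by blast
    have "(v,w) \<in> ?A ^^ (gdist E v w)" unfolding gdist_def by (rule LeastI[of _ k], rule k)
    then have 2: "(v,w) \<in> ?A ^^ 2" using w by simp
    have n0: "\<not> (v,w) \<in> ?A ^^ 0"
    proof
      assume "(v,w) \<in> ?A ^^ 0"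
      then have "gdist E v w \<le> 0" unfolding gdist_def by (rule Least_le)
      then show False using w by simp
    qed
    have n1: "\<not> (v,w) \<in> ?A ^^ 1"
    proof
      assume "(v,w) \<in> ?A ^^ 1"
      then have "gdist E v w \<le> 1" unfolding gdist_def by (rule Least_le)
      then show False using w by simp
    qed
    show "w \<in> D2 V E v" using w 2 n0 n1 unfolding D2_def relpow2_iff by auto
  next
    fix w assume "w \<in> D2 V E v"
    then have w: "w \<in> V" "w \<noteq> v" "(v,w) \<notin> ?A" "\<exists>u. (v,u) \<in> ?A \<and> (u,w) \<in> ?A"
      unfolding D2_def by auto
    then have 2: "(v,w) \<in> ?A ^^ 2" by (simp add: relpow2_iff)
    then have "(v,w) \<in> ?A\<^sup>*" by (meson relpow_imp_rtrancl)
    moreover have "gdist E v w = 2" unfolding gdist_def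
    proof (rule Least_equality)
      show "(v,w) \<in> ?A ^^ 2" by (rule 2)
    next
      fix k assume k: "(v,w) \<in> ?A ^^ k"
      show "2 \<le> k"
      proof (rule ccontr)
        assume "\<not> 2 \<le> k" then have "k = 0 \<or> k = 1" by auto
        then show False using k w by auto
      qed
    qed
    ultimately show "w \<in> {w \<in> V. (v,w) \<in> ?A\<^sup>* \<and> gdist E v w = 2}" using w by auto
  qed
  then show ?thesis unfolding tau_def by simp
qed

lemma adj_rel_image:
  assumes "inj T"
  shows "(T u, T v) \<in> adj_rel ((`) T ` E) \<longleftrightarrow> (u,v) \<in> adj_rel E"
proof -
  have ii: "inj ((`) T)" using assms by (meson inj_image_eq_iff inj_onI)
  have "{T u, T v} = T ` {u,v}" by simp
  then have "{T u, T v} \<in> (`) T ` E \<longleftrightarrow> {u,v} \<in> E"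
    using inj_image_mem_iff[OF ii] by metis
  then show ?thesis unfolding adj_rel_def using inj_eq[OF assms] by auto
qed

lemma adj_rel_image_range:
  assumes "(x,y) \<in> adj_rel ((`) T ` E)"
  shows "x \<in> range T \<and> y \<in> range T"
  using assms unfolding adj_rel_def by (auto simp: doubleton_eq_iff)

lemma D2_image:
  assumes "inj T"
  shows "D2 (T ` V) ((`) T ` E) (T v) = T ` D2 V E v"
proof (intro set_eqI iffI)
  fix w' assume "w' \<in> D2 (T ` V) ((`) T ` E) (T v)"
  then obtain w u' where w: "w' = T w" "w \<in> V" "T w \<noteq> T v" "(T v, T w) \<notin> adj_rel ((`) T ` E)"
    "(T v,u') \<in> adj_rel ((`) T ` E)" "(u', T w) \<in> adj_rel ((`) T ` E)"
    unfolding D2_def by auto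
  then obtain u where u: "u' = T u" using adj_rel_image_range by blast
  have "w \<in> D2 V E v" using w u adj_rel_image[OF assms, of v u] adj_rel_image[OF assms, of u w] adj_rel_image[OF assms, of v w] unfolding D2_def by blast
  then show "w' \<in> T ` D2 V E v" using w by auto
next
  fix w' assume "w' \<in> T ` D2 V E v"
  then obtain w u where w: "w' = T w" "w \<in> V" "w \<noteq> v" "(v, w) \<notin> adj_rel E"
    "(v,u) \<in> adj_rel E" "(u, w) \<in> adj_rel E"
    unfolding D2_def by auto
  moreover have "T w \<noteq> T v" using w(3) inj_eq[OF assms] by auto
  moreover have "(T v, T w) \<notin> adj_rel ((`) T ` E)" using w(4) adj_rel_image[OF assms] by simp
  moreover have "(T v, T u) \<in> adj_rel ((`) T ` E)" using w(5) adj_rel_image[OF assms] by simp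
  moreover have "(T u, T w) \<in> adj_rel ((`) T ` E)" using w(6) adj_rel_image[OF assms] by simp
  ultimately show "w' \<in> D2 (T ` V) ((`) T ` E) (T v)"
    unfolding D2_def w(1) using w(2) by (auto simp del: split_paired_Ex)
qed

lemma tau_image:
  assumes "inj T"
  shows "tau (T ` V) ((`) T ` E) (T v) = tau V E v"
  unfolding tau_D2 D2_image[OF assms] by (rule card_image[OF inj_on_subset[OF assms]]) simp

lemma ZC1_image:
  assumes "inj T"
  shows "ZC1 (T ` V) ((`) T ` E) = ZC1 V E"
  unfolding ZC1_def by (simp add: sum.reindex inj_on_subset[OF assms] tau_image[OF assms])

lemma ZC2_image:
  assumes "inj T"
  shows "ZC2 (T ` V) ((`) T ` E) = ZC2 V E"
proof -
  have inj2: "inj_on ((`) T) E" using assms by (meson inj_image_eq_iff inj_onI)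
  have "ZC2 (T ` V) ((`) T ` E) = (\<Sum>e\<in>E. \<Prod>v\<in>T ` e. tau (T ` V) ((`) T ` E) v)"
    unfolding ZC2_def by (simp add: sum.reindex[OF inj2])
  also have "\<dots> = (\<Sum>e\<in>E. \<Prod>v\<in>e. tau V E v)"
    by (rule sum.cong[OF refl]) (simp add: prod.reindex inj_on_subset[OF assms] tau_image[OF assms])
  finally show ?thesis unfolding ZC2_def .
qed



definition Vc :: "nat \<Rightarrow> pt set" where
  "Vc n = {(0,0),(0,1)} \<union> (\<lambda>k. (1, int k)) ` {..<n} \<union> (\<lambda>k. (2, int k)) ` {..<n}"

definition Ec :: "nat \<Rightarrow> pt set set" where
  "Ec n = {{(0,0),(1,0)}, {(0,0),(0,1)}, {(0,1),(1,1)}}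
     \<union> (\<lambda>k. {(1, int k),(2, int k)}) ` {..<n}
     \<union> (\<lambda>k. {(1, int k),(1, int k + 1)}) ` {..<n-1}
     \<union> (\<lambda>k. {(2, int k),(2, int k + 1)}) ` {..<n-1}"

definition Nb :: "nat \<Rightarrow> pt \<Rightarrow> pt set" where
  "Nb n p = (case p of (x,y) \<Rightarrow>
     if x = 0 \<and> y = 0 then {(0,1),(1,0)}
     else if x = 0 \<and> y = 1 then {(0,0),(1,1)}
     else if (x = 1 \<or> x = 2) \<and> 0 \<le> y \<and> y < int n then
       insert (3-x,y) ((if 1 \<le> y then {(x,y-1)} else {}) \<union> (if y+1 < int n then {(x,y+1)} else {})
          \<union> (if x = 1 \<and> y \<le> 1 then {(0,y)} else {}))
     else {})"

lemma ex_int_nat: "(\<exists>k<n. P (int k)) \<longleftrightarrow> (\<exists>y. 0 \<le> y \<and> y < int n \<and> P y)"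
  by (metis nonneg_int_cases of_nat_0_le_iff of_nat_less_iff)

lemma Vc_mem: "(x,y) \<in> Vc n \<longleftrightarrow> (x = 0 \<and> (y = 0 \<or> y = 1)) \<or> ((x = 1 \<or> x = 2) \<and> 0 \<le> y \<and> y < int n)"
proof -
  have a: "(x,y) \<in> (\<lambda>k. (a, int k)) ` {..<n} \<longleftrightarrow> x = a \<and> 0 \<le> y \<and> y < int n" for a
  proof -
    have "(x,y) \<in> (\<lambda>k. (a, int k)) ` {..<n} \<longleftrightarrow> (\<exists>k<n. (x,y) = (a, int k))" by auto
    also have "\<dots> \<longleftrightarrow> (\<exists>z. 0 \<le> z \<and> z < int n \<and> (x,y) = (a,z))" by (rule ex_int_nat)
    finally show ?thesis by auto
  qed
  show ?thesis unfolding Vc_def Un_iff a by auto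
qed

lemma memH: "{u,v} \<in> (\<lambda>k. {(a, int k),(b, int k)}) ` {..<n} \<longleftrightarrow>
   (\<exists>y. 0 \<le> y \<and> y < int n \<and> (u = (a,y) \<and> v = (b,y) \<or> u = (b,y) \<and> v = (a,y)))"
proof -
  have "{u,v} \<in> (\<lambda>k. {(a, int k),(b, int k)}) ` {..<n} \<longleftrightarrow> (\<exists>k<n. {u,v} = {(a, int k),(b, int k)})"
    by auto
  also have "\<dots> \<longleftrightarrow> (\<exists>y. 0 \<le> y \<and> y < int n \<and> {u,v} = {(a, y),(b, y)})"
    by (rule ex_int_nat)
  finally show ?thesis by (simp add: doubleton_eq_iff)
qed

lemma memL: "{u,v} \<in> (\<lambda>k. {(a, int k),(a, int k + 1)}) ` {..<m} \<longleftrightarrow>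
   (\<exists>y. 0 \<le> y \<and> y < int m \<and> (u = (a,y) \<and> v = (a,y+1) \<or> u = (a,y+1) \<and> v = (a,y)))"
proof -
  have "{u,v} \<in> (\<lambda>k. {(a, int k),(a, int k + 1)}) ` {..<m} \<longleftrightarrow> (\<exists>k<m. {u,v} = {(a, int k),(a, int k + 1)})"
    by auto
  also have "\<dots> \<longleftrightarrow> (\<exists>y. 0 \<le> y \<and> y < int m \<and> {u,v} = {(a, y),(a, y + 1)})"
    by (rule ex_int_nat)
  finally show ?thesis by (simp add: doubleton_eq_iff)
qed

lemma memH': "{(x,y),(x',y')} \<in> (\<lambda>k. {(a, int k),(b, int k)}) ` {..<n} \<longleftrightarrow>
   0 \<le> y \<and> y < int n \<and> y' = y \<and> (x = a \<and> x' = b \<or> x = b \<and> x' = a)"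
  unfolding memH by auto

lemma memL': "{(x,y),(x',y')} \<in> (\<lambda>k. {(a, int k),(a, int k + 1)}) ` {..<m} \<longleftrightarrow>
   x = a \<and> x' = a \<and> (0 \<le> y \<and> y < int m \<and> y' = y + 1 \<or> 0 \<le> y' \<and> y' < int m \<and> y = y' + 1)"
  unfolding memL by auto

definition AF :: "nat \<Rightarrow> int \<Rightarrow> int \<Rightarrow> int \<Rightarrow> int \<Rightarrow> bool" where
  "AF n x y x' y' \<longleftrightarrow> (x=0\<and>y=0\<and>x'=1\<and>y'=0) \<or> (x=1\<and>y=0\<and>x'=0\<and>y'=0) \<or> (x=0\<and>y=0\<and>x'=0\<and>y'=1)
      \<or> (x=0\<and>y=1\<and>x'=0\<and>y'=0) \<or> (x=0\<and>y=1\<and>x'=1\<and>y'=1) \<or> (x=1\<and>y=1\<and>x'=0\<and>y'=1)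
      \<or> (0 \<le> y \<and> y < int n \<and> y' = y \<and> (x = 1 \<and> x' = 2 \<or> x = 2 \<and> x' = 1))
      \<or> (x = 1 \<and> x' = 1 \<and> (0 \<le> y \<and> y < int n - 1 \<and> y' = y + 1 \<or> 0 \<le> y' \<and> y' < int n - 1 \<and> y = y' + 1))
      \<or> (x = 2 \<and> x' = 2 \<and> (0 \<le> y \<and> y < int n - 1 \<and> y' = y + 1 \<or> 0 \<le> y' \<and> y' < int n - 1 \<and> y = y' + 1))"

lemma extras_mem: "{(x,y),(x',y')} \<in> {{(0,0),(1,0)}, {(0,0),(0,1)}, {(0,1),(1,1)}} \<longleftrightarrow>
  (x=0\<and>y=0\<and>x'=1\<and>y'=0) \<or> (x=1\<and>y=0\<and>x'=0\<and>y'=0) \<or> (x=0\<and>y=0\<and>x'=0\<and>y'=1)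
      \<or> (x=0\<and>y=1\<and>x'=0\<and>y'=0) \<or> (x=0\<and>y=1\<and>x'=1\<and>y'=1) \<or> (x=1\<and>y=1\<and>x'=0\<and>y'=1)"
  by (simp add: doubleton_eq_iff)

lemma adj_Ec0:
  assumes "n \<ge> 2"
  shows "((x,y),(x',y')) \<in> adj_rel (Ec n) \<longleftrightarrow> AF n x y x' y'"
proof -
  have m: "int (n - 1) = int n - 1" using assms by simp
  have "((x,y),(x',y')) \<in> adj_rel (Ec n) \<longleftrightarrow> {(x,y),(x',y')} \<in> Ec n \<and> (x,y) \<noteq> (x',y')"
    by (simp add: adj_rel_def)
  also have "\<dots> \<longleftrightarrow> AF n x y x' y' \<and> (x,y) \<noteq> (x',y')"
    unfolding Ec_def Un_iff memH' memL' m extras_mem AF_def by (simp only: disj_assoc)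
  also have "\<dots> \<longleftrightarrow> AF n x y x' y'"
  proof -
    have "AF n x y x' y' \<Longrightarrow> (x,y) \<noteq> (x',y')"
      by (unfold AF_def, elim disjE conjE, simp_all)
    then show ?thesis by blast
  qed
  finally show ?thesis .
qed

lemma AF_Nb:
  assumes "n \<ge> 2"
  shows "AF n x y x' y' \<longleftrightarrow> (x',y') \<in> Nb n (x,y)"
proof (cases "x = 0")
  case True then show ?thesis unfolding AF_def Nb_def using assms by auto
next
  case x0: False
  show ?thesis
  proof (cases "x = 1")
    case True then show ?thesis unfolding AF_def Nb_def using assms by auto
  next
    case x1: False
    show ?thesis
    proof (cases "x = 2")
      case True then show ?thesis unfolding AF_def Nb_def using assms by auto
    next
      case False then show ?thesis unfolding AF_def Nb_def using assms x0 x1 by auto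
    qed
  qed
qed
lemma adj_nb: "n \<ge> 2 \<Longrightarrow> (p,q) \<in> adj_rel (Ec n) \<longleftrightarrow> q \<in> Nb n p"
  using adj_Ec0[of n "fst p" "snd p" "fst q" "snd q"] AF_Nb[of n "fst p" "snd p" "fst q" "snd q"] by simp

lemma Nb_sub: "n \<ge> 2 \<Longrightarrow> Nb n p \<subseteq> Vc n"
  by (cases p) (auto simp: Nb_def Vc_mem split: if_splits)

definition D2' :: "nat \<Rightarrow> pt \<Rightarrow> pt set" where
  "D2' n v = (\<Union>u\<in>Nb n v. Nb n u) - Nb n v - {v}"

lemma D2_can: assumes "n \<ge> 2" shows "D2 (Vc n) (Ec n) v = D2' n v"
  unfolding D2_def D2'_def adj_nb[OF assms] using Nb_sub[OF assms] by blast

definition tc :: "nat \<Rightarrow> pt \<Rightarrow> nat" where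
  "tc n p = (case p of (x,y) \<Rightarrow>
    if x = 0 then (if y = 0 then 2 else 3)
    else if x = 1 then (if y = 0 then 3 else if y = 1 then 4 else if y = 2 then (if n = 4 then 4 else 5)
       else if y = int n - 1 then 2 else if y = int n - 2 then 3 else 4)
    else (if y = 0 then 3 else if y = int n - 1 then 2 else if y = int n - 2 then 3 else 4))"

lemma card_D2': assumes n: "n \<ge> 4" and v: "v \<in> Vc n" shows "card (D2' n v) = tc n v"
proof -
  obtain x y where xy: "v = (x,y)" by force
  have "x = 0 \<and> (y = 0 \<or> y = 1) \<or> (x = 1 \<or> x = 2) \<and> 0 \<le> y \<and> y < int n" using v xy Vc_mem by auto
  then consider "x = 0" "y = 0" | "x = 0" "y = 1" | "x = 1" "y = 0" | "x = 1" "y = 1" | "x = 1" "y = 2"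
    | "x = 1" "y = int n - 1" "3 \<le> y" | "x = 1" "y = int n - 2" "3 \<le> y" | "x = 1" "3 \<le> y" "y + 3 \<le> int n"
    | "x = 2" "y = 0" | "x = 2" "y = int n - 1" | "x = 2" "y = int n - 2" | "x = 2" "1 \<le> y" "y + 3 \<le> int n"
    using n by (elim disjE conjE) (smt (verit))+
  then show ?thesis
    by cases (use n in \<open>simp_all add: xy D2'_def Nb_def tc_def card_insert_if\<close>)
qed


definition can :: "nat \<Rightarrow> pt" where
  "can i = (if i = 0 then (0,0) else (1, int i - 1))"

lemma UV: "(\<Union>k<Suc m. sq_corners (1, int k)) = (\<lambda>k. (1, int k)) ` {..<Suc (Suc m)} \<union> (\<lambda>k. (2, int k)) ` {..<Suc (Suc m)}"
proof (induction m)
  case 0 then show ?case by (auto simp: sq_corners_def lessThan_Suc)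
next
  case (Suc m)
  have "(\<Union>k<Suc (Suc m). sq_corners (1, int k)) = sq_corners (1, int (Suc m)) \<union> (\<Union>k<Suc m. sq_corners (1, int k))"
    by (simp add: lessThan_Suc)
  also have "\<dots> = (\<lambda>k. (1, int k)) ` {..<Suc (Suc (Suc m))} \<union> (\<lambda>k. (2, int k)) ` {..<Suc (Suc (Suc m))}"
    unfolding Suc.IH by (auto simp: sq_corners_def lessThan_Suc)
  finally show ?case .
qed

lemma UE: "(\<Union>k<Suc m. sq_sides (1, int k)) = (\<lambda>k. {(1, int k),(2, int k)}) ` {..<Suc (Suc m)}
     \<union> (\<lambda>k. {(1, int k),(1, int k + 1)}) ` {..<Suc m}
     \<union> (\<lambda>k. {(2, int k),(2, int k + 1)}) ` {..<Suc m}"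
proof (induction m)
  case 0 then show ?case by (auto simp: sq_sides_def lessThan_Suc insert_commute)
next
  case (Suc m)
  have "(\<Union>k<Suc (Suc m). sq_sides (1, int k)) = sq_sides (1, int (Suc m)) \<union> (\<Union>k<Suc m. sq_sides (1, int k))"
    by (simp add: lessThan_Suc)
  also have "\<dots> = (\<lambda>k. {(1, int k),(2, int k)}) ` {..<Suc (Suc (Suc m))}
     \<union> (\<lambda>k. {(1, int k),(1, int k + 1)}) ` {..<Suc (Suc m)}
     \<union> (\<lambda>k. {(2, int k),(2, int k + 1)}) ` {..<Suc (Suc m)}"
    unfolding Suc.IH by (auto simp: sq_sides_def lessThan_Suc insert_commute)
  finally show ?case .
qed

lemma lessThan_shift: assumes "n \<ge> 2" shows "{..<n} = insert 0 (Suc ` {..<Suc (n - 2)})"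
proof -
  obtain m where m: "n = Suc (Suc m)" using assms by (metis add_2_eq_Suc le_Suc_ex)
  show ?thesis unfolding m using lessThan_Suc_eq_insert_0[of "Suc m"] by simp
qed

lemma chainV_can: assumes "n \<ge> 2" shows "chain_V can n = Vc n"
proof -
  have "chain_V can n = sq_corners (0,0) \<union> (\<Union>k<Suc (n-2). sq_corners (1, int k))"
    unfolding chain_V_def lessThan_shift[OF assms] by (simp add: can_def)
  also have "\<dots> = Vc n" unfolding UV Vc_def using assms by (auto simp: sq_corners_def)
  finally show ?thesis .
qed

lemma chainE_can: assumes "n \<ge> 2" shows "chain_E can n = Ec n"
proof -
  have "chain_E can n = sq_sides (0,0) \<union> (\<Union>k<Suc (n-2). sq_sides (1, int k))"
    unfolding chain_E_def lessThan_shift[OF assms] by (simp add: can_def)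
  also have "\<dots> = Ec n"
  proof -
    have e1: "Suc (Suc (n-2)) = n" "Suc (n-2) = n - 1" "Suc (n - 1) = n" using assms by auto
    have m: "{(1::int,0::int),(1,1)} \<in> (\<lambda>k. {(1, int k),(1, int k + 1)}) ` {..<n-1}"
      using assms by (auto simp: image_iff intro!: bexI[of _ 0])
    have s0: "sq_sides (0,0) = {{(0,0),(1,0)}, {(1,0),(1,1)}, {(1,1),(0,1)}, {(0,1),(0,0)}}"
      by (simp add: sq_sides_def)
    have "{(1::int,1::int),(0,1)} = {(0,1),(1,1)}" "{(0::int,1::int),(0,0)} = {(0,0),(0,1)}"
      by (rule insert_commute)+
    then have s1: "sq_sides (0,0) = {{(0,0),(1,0)}, {(0,0),(0,1)}, {(0,1),(1,1)}} \<union> {{(1,0),(1,1)}}"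
      unfolding s0 by auto
    have ab: "\<And>D L X H R. D \<in> L \<Longrightarrow> (X \<union> {D}) \<union> (H \<union> L \<union> R) = X \<union> H \<union> L \<union> R" by blast
    show ?thesis unfolding UE unfolding Ec_def e1 s1 by (rule ab[OF m])
  qed
  finally show ?thesis .
qed


lemma sum_corr:
  fixes f :: "nat \<Rightarrow> int"
  assumes "finite T" "S \<subseteq> T" "\<And>k. k \<in> T \<Longrightarrow> k \<notin> S \<Longrightarrow> f k = c"
  shows "(\<Sum>k\<in>T. f k) = c * int (card T) + (\<Sum>k\<in>S. f k - c)"
proof -
  have "(\<Sum>k\<in>T. f k) = c * int (card T) + (\<Sum>k\<in>T. f k - c)" by (simp add: sum_subtractf mult.commute)
  also have "(\<Sum>k\<in>T. f k - c) = (\<Sum>k\<in>S. f k - c)"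
    by (rule sum.mono_neutral_right[OF assms(1,2)]) (use assms(3) in auto)
  finally show ?thesis .
qed

lemma P1: assumes "n \<ge> 5" shows "(\<Sum>k<n. int (tc n (1, int k))^2) = 16 * int n - 17"
proof -
  obtain m where m: "n = m + 5" using assms by (metis add.commute le_Suc_ex)
  have "(\<Sum>k<n. int (tc n (1, int k))^2) = 16 * int (card {..<n}) + (\<Sum>k\<in>{0,2,n-2,n-1}. int (tc n (1, int k))^2 - 16)"
    by (rule sum_corr) (use assms in \<open>auto simp: tc_def\<close>)
  also have "\<dots> = 16 * int n - 17" using m by (simp add: tc_def)
  finally show ?thesis .
qed

lemma P2: assumes "n \<ge> 4" shows "(\<Sum>k<n. int (tc n (2, int k))^2) = 16 * int n - 26"
proof -
  obtain m where m: "n = m + 4" using assms by (metis add.commute le_Suc_ex)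
  have "(\<Sum>k<n. int (tc n (2, int k))^2) = 16 * int (card {..<n}) + (\<Sum>k\<in>{0,n-2,n-1}. int (tc n (2, int k))^2 - 16)"
    by (rule sum_corr) (use assms in \<open>auto simp: tc_def\<close>)
  also have "\<dots> = 16 * int n - 26" using m by (simp add: tc_def)
  finally show ?thesis .
qed

lemma PH: assumes "n \<ge> 5" shows "(\<Sum>k<n. int (tc n (1, int k)) * int (tc n (2, int k))) = 16 * int n - 22"
proof -
  obtain m where m: "n = m + 5" using assms by (metis add.commute le_Suc_ex)
  have "(\<Sum>k<n. int (tc n (1, int k)) * int (tc n (2, int k))) = 16 * int (card {..<n}) + (\<Sum>k\<in>{0,2,n-2,n-1}. int (tc n (1, int k)) * int (tc n (2, int k)) - 16)"
    by (rule sum_corr) (use assms in \<open>auto simp: tc_def\<close>)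
  also have "\<dots> = 16 * int n - 22" using m by (simp add: tc_def)
  finally show ?thesis .
qed

lemma PL: assumes "n \<ge> 6" shows "(\<Sum>k<n-1. int (tc n (1, int k)) * int (tc n (1, int k + 1))) = 16 * int n - 26"
proof -
  obtain m where m: "n = m + 6" using assms by (metis add.commute le_Suc_ex)
  have "(\<Sum>k<n-1. int (tc n (1, int k)) * int (tc n (1, int k + 1))) = 16 * int (card {..<n-1}) + (\<Sum>k\<in>{0,1,2,n-3,n-2}. int (tc n (1, int k)) * int (tc n (1, int k + 1)) - 16)"
    by (rule sum_corr) (use assms in \<open>auto simp: tc_def\<close>)
  also have "\<dots> = 16 * int n - 26" using m by (simp add: tc_def)
  finally show ?thesis .
qed

lemma PR: assumes "n \<ge> 5" shows "(\<Sum>k<n-1. int (tc n (2, int k)) * int (tc n (2, int k + 1))) = 16 * int n - 34"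
proof -
  obtain m where m: "n = m + 5" using assms by (metis add.commute le_Suc_ex)
  have "(\<Sum>k<n-1. int (tc n (2, int k)) * int (tc n (2, int k + 1))) = 16 * int (card {..<n-1}) + (\<Sum>k\<in>{0,n-3,n-2}. int (tc n (2, int k)) * int (tc n (2, int k + 1)) - 16)"
    by (rule sum_corr) (use assms in \<open>auto simp: tc_def\<close>)
  also have "\<dots> = 16 * int n - 34" using m by (simp add: tc_def)
  finally show ?thesis .
qed

lemma P1_4: "(\<Sum>k<4. int (tc 4 (1, int k))^2) = 45"
  by (simp add: tc_def eval_nat_numeral)

lemma PL_5: "(\<Sum>k<5-1. int (tc 5 (1, int k)) * int (tc 5 (1, int k + 1))) = 53"
  by (simp add: tc_def eval_nat_numeral)


lemma tau_can: "n \<ge> 4 \<Longrightarrow> v \<in> Vc n \<Longrightarrow> tau (Vc n) (Ec n) v = tc n v"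
  using tau_D2 D2_can card_D2' by simp

lemma Vc_split: "Vc n = {(0,0),(0,1)} \<union> ((\<lambda>k. (1, int k)) ` {..<n} \<union> (\<lambda>k. (2, int k)) ` {..<n})"
  unfolding Vc_def by auto

lemma ZC1_can: assumes "n \<ge> 4"
  shows "int (ZC1 (Vc n) (Ec n)) = 13 + (\<Sum>k<n. int (tc n (1, int k))^2) + (\<Sum>k<n. int (tc n (2, int k))^2)"
proof -
  have "int (ZC1 (Vc n) (Ec n)) = (\<Sum>v\<in>Vc n. int (tc n v)^2)"
    unfolding ZC1_def using tau_can[OF assms] by simp
  also have "\<dots> = (\<Sum>v\<in>{(0,0),(0,1)}. int (tc n v)^2) + ((\<Sum>v\<in>(\<lambda>k. (1, int k)) ` {..<n}. int (tc n v)^2)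
      + (\<Sum>v\<in>(\<lambda>k. (2, int k)) ` {..<n}. int (tc n v)^2))"
    unfolding Vc_split by (subst sum.union_disjoint; (subst sum.union_disjoint)?; auto)
  also have "\<dots> = 13 + (\<Sum>k<n. int (tc n (1, int k))^2) + (\<Sum>k<n. int (tc n (2, int k))^2)"
    by (simp add: sum.reindex inj_on_def tc_def)
  finally show ?thesis .
qed

lemma Ec_split: "Ec n = {{(0,0),(1,0)}, {(0,0),(0,1)}, {(0,1),(1,1)}}
     \<union> ((\<lambda>k. {(1, int k),(2, int k)}) ` {..<n}
     \<union> ((\<lambda>k. {(1, int k),(1, int k + 1)}) ` {..<n-1}
     \<union> (\<lambda>k. {(2, int k),(2, int k + 1)}) ` {..<n-1}))"
  unfolding Ec_def by auto

lemma fstH: "e \<in> (\<lambda>k. {(1::int, int k),(2::int, int k)}) ` K \<Longrightarrow> (\<exists>p\<in>e. fst p = 2) \<and> (\<forall>p\<in>e. fst p \<noteq> 0)" by auto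
lemma fstL: "e \<in> (\<lambda>k. {(a::int, int k),(a, int k + 1)}) ` K \<Longrightarrow> (\<forall>p\<in>e. fst p = a)" by auto
lemma fstX: "e \<in> {{(0::int,0::int),(1,0)}, {(0,0),(0,1)}, {(0,1),(1,1)}} \<Longrightarrow> (\<exists>p\<in>e. fst p = 0)" by auto

lemma disj_Ec:
  "{{(0::int,0::int),(1,0)}, {(0,0),(0,1)}, {(0,1),(1,1)}} \<inter> ((\<lambda>k. {(1, int k),(2, int k)}) ` {..<n}
     \<union> ((\<lambda>k. {(1, int k),(1, int k + 1)}) ` {..<m}
     \<union> (\<lambda>k. {(2, int k),(2, int k + 1)}) ` {..<m})) = {}"
  "(\<lambda>k. {(1::int, int k),(2::int, int k)}) ` {..<n} \<inter> ((\<lambda>k. {(1, int k),(1, int k + 1)}) ` {..<m}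
     \<union> (\<lambda>k. {(2, int k),(2, int k + 1)}) ` {..<m}) = {}"
  "(\<lambda>k. {(1::int, int k),(1::int, int k + 1)}) ` {..<m} \<inter> (\<lambda>k. {(2, int k),(2, int k + 1)}) ` {..<m} = {}"
proof -
  have D: "\<And>A B P. (\<And>e. e \<in> A \<Longrightarrow> P e) \<Longrightarrow> (\<And>e. e \<in> B \<Longrightarrow> \<not> P e) \<Longrightarrow> A \<inter> B = {}" by blast
  show "{{(0::int,0::int),(1,0)}, {(0,0),(0,1)}, {(0,1),(1,1)}} \<inter> ((\<lambda>k. {(1, int k),(2, int k)}) ` {..<n}
     \<union> ((\<lambda>k. {(1, int k),(1, int k + 1)}) ` {..<m}
     \<union> (\<lambda>k. {(2, int k),(2, int k + 1)}) ` {..<m})) = {}"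
    by (rule D[where P = "\<lambda>e. (0::int) \<in> fst ` e"]) auto
  show "(\<lambda>k. {(1::int, int k),(2::int, int k)}) ` {..<n} \<inter> ((\<lambda>k. {(1, int k),(1, int k + 1)}) ` {..<m}
     \<union> (\<lambda>k. {(2, int k),(2, int k + 1)}) ` {..<m}) = {}"
    by (rule D[where P = "\<lambda>e. (1::int) \<in> fst ` e \<and> (2::int) \<in> fst ` e"]) auto
  show "(\<lambda>k. {(1::int, int k),(1::int, int k + 1)}) ` {..<m} \<inter> (\<lambda>k. {(2, int k),(2, int k + 1)}) ` {..<m} = {}"
    by (rule D[where P = "\<lambda>e. (1::int) \<in> fst ` e"]) auto
qed

lemma ZC2_can: assumes "n \<ge> 4"
  shows "int (ZC2 (Vc n) (Ec n)) = 24 + (\<Sum>k<n. int (tc n (1, int k)) * int (tc n (2, int k)))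
     + (\<Sum>k<n-1. int (tc n (1, int k)) * int (tc n (1, int k + 1)))
     + (\<Sum>k<n-1. int (tc n (2, int k)) * int (tc n (2, int k + 1)))"
proof -
  have h: "(a, int x + 1) \<in> (\<lambda>k. (a, int k)) ` {..<n}" if "x < n - Suc 0" for a x
    using that by (auto simp: image_iff intro!: bexI[of _ "Suc x"])
  have dbl: "\<exists>a b. a \<noteq> b \<and> e = {a,b}" if "e \<in> Ec n" for e
  proof -
    have dd: "\<And>a b. a \<noteq> b \<Longrightarrow> \<exists>x y. x \<noteq> y \<and> {a,b} = {x,y}" by blast
    show ?thesis using that unfolding Ec_def apply -
      by (elim UnE imageE insertE emptyE; hypsubst?; rule dd; simp)
  qed
  have sub: "\<Union>(Ec n) \<subseteq> Vc n"
  proof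
    fix p assume "p \<in> \<Union>(Ec n)"
    then obtain e where e: "e \<in> Ec n" "p \<in> e" by blast
    then obtain q where "q \<noteq> p" "{q,p} \<in> Ec n" using dbl[OF e(1)] by (metis empty_iff insertE insert_commute)
    then have "(q,p) \<in> adj_rel (Ec n)" unfolding adj_rel_def by simp
    then show "p \<in> Vc n" using adj_nb[of n q p] Nb_sub[of n q] assms by auto
  qed
  have "int (ZC2 (Vc n) (Ec n)) = (\<Sum>e\<in>Ec n. \<Prod>v\<in>e. int (tc n v))"
    unfolding ZC2_def of_nat_sum of_nat_prod
  proof (rule sum.cong[OF refl], rule prod.cong[OF refl])
    fix e v assume "e \<in> Ec n" "v \<in> e"
    then have "v \<in> Vc n" using sub by blast
    then show "int (tau (Vc n) (Ec n) v) = int (tc n v)" using tau_can[OF assms] by simp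
  qed
  also have "\<dots> = (\<Sum>e\<in>{{(0,0),(1,0)}, {(0,0),(0,1)}, {(0,1),(1,1)}}. \<Prod>v\<in>e. int (tc n v))
     + ((\<Sum>e\<in>(\<lambda>k. {(1, int k),(2, int k)}) ` {..<n}. \<Prod>v\<in>e. int (tc n v))
     + ((\<Sum>e\<in>(\<lambda>k. {(1, int k),(1, int k + 1)}) ` {..<n-1}. \<Prod>v\<in>e. int (tc n v))
     + (\<Sum>e\<in>(\<lambda>k. {(2, int k),(2, int k + 1)}) ` {..<n-1}. \<Prod>v\<in>e. int (tc n v))))"
    unfolding Ec_split
    by (subst sum.union_disjoint, simp, simp, rule disj_Ec,
        subst sum.union_disjoint, simp, simp, rule disj_Ec,
        subst sum.union_disjoint, simp, simp, rule disj_Ec, rule refl)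
  also have "\<dots> = 24 + (\<Sum>k<n. int (tc n (1, int k)) * int (tc n (2, int k)))
     + (\<Sum>k<n-1. int (tc n (1, int k)) * int (tc n (1, int k + 1)))
     + (\<Sum>k<n-1. int (tc n (2, int k)) * int (tc n (2, int k + 1)))"
  proof -
    have x3: "(\<Sum>e\<in>{{(0,0),(1,0)}, {(0,0),(0,1)}, {(0,1),(1,1)}}. \<Prod>v\<in>e. int (tc n v)) = 24"
      by (simp add: doubleton_eq_iff tc_def)
    have ih: "inj_on (\<lambda>k. {(1::int, int k),(2::int, int k)}) K" for K
      by (rule inj_onI) (simp add: doubleton_eq_iff)
    have il: "inj_on (\<lambda>k. {(a::int, int k),(a, int k + 1)}) K" for K a
      by (rule inj_onI) (auto simp add: doubleton_eq_iff)
    have h: "(\<Sum>e\<in>(\<lambda>k. {(1, int k),(2, int k)}) ` {..<n}. \<Prod>v\<in>e. int (tc n v)) =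
       (\<Sum>k<n. int (tc n (1, int k)) * int (tc n (2, int k)))"
      by (simp add: sum.reindex[OF ih])
    have l: "(\<Sum>e\<in>(\<lambda>k. {(a, int k),(a, int k + 1)}) ` {..<n-1}. \<Prod>v\<in>e. int (tc n v)) =
       (\<Sum>k<n-1. int (tc n (a, int k)) * int (tc n (a, int k + 1)))" for a
      by (simp add: sum.reindex[OF il])
    show ?thesis unfolding x3 h l by simp
  qed
  finally show ?thesis .
qed



definition Qm :: "pt \<Rightarrow> pt \<Rightarrow> pt \<Rightarrow> pt \<Rightarrow> pt" where
  "Qm q a b p = (fst q + fst p * fst a + snd p * fst b, snd q + fst p * snd a + snd p * snd b)"

definition Tm :: "pt \<Rightarrow> pt \<Rightarrow> pt \<Rightarrow> pt \<Rightarrow> pt" where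
  "Tm q a b p = (fst q - min (fst a) 0 - min (fst b) 0 + fst p * fst a + snd p * fst b,
                 snd q - min (snd a) 0 - min (snd b) 0 + fst p * snd a + snd p * snd b)"

definition sh :: "pt \<Rightarrow> pt \<Rightarrow> pt" where "sh p d = (fst p + fst d, snd p + snd d)"

definition off :: "pt \<Rightarrow> pt \<Rightarrow> pt \<Rightarrow> pt" where
  "off a b d = (fst d * fst a + snd d * fst b - min (fst a) 0 - min (fst b) 0,
                fst d * snd a + snd d * snd b - min (snd a) 0 - min (snd b) 0)"

definition C0 :: "pt set" where "C0 = {(0,0),(1,0),(1,1),(0,1)}"
definition S0 :: "pt set set" where "S0 = {{(0,0),(1,0)}, {(1,0),(1,1)}, {(1,1),(0,1)}, {(0,1),(0,0)}}"

lemma Tm_sh: "Tm q a b (sh p d) = sh (Qm q a b p) (off a b d)"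
  by (simp add: Tm_def sh_def Qm_def off_def algebra_simps)

lemma corners_sh: "sq_corners p = sh p ` C0"
  by (cases p) (simp add: sq_corners_def sh_def C0_def)

lemma sides_sh: "sq_sides p = (`) (sh p) ` S0"
  by (cases p) (simp add: sq_sides_def sh_def S0_def)

definition goodab :: "pt \<Rightarrow> pt \<Rightarrow> bool" where
  "goodab a b \<longleftrightarrow> (a = (1,0) \<or> a = (-1,0)) \<and> (b = (0,1) \<or> b = (0,-1)) \<or> (a = (0,1) \<or> a = (0,-1)) \<and> (b = (1,0) \<or> b = (-1,0))"

lemma off_C0: "goodab a b \<Longrightarrow> off a b ` C0 = C0"
  unfolding goodab_def C0_def
  by (elim disjE conjE; simp add: off_def; blast)

lemma off_S0: "goodab a b \<Longrightarrow> (`) (off a b) ` S0 = S0"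
  unfolding goodab_def S0_def
  by (elim disjE conjE; simp add: off_def insert_commute; blast?)

lemma corners_map: "goodab a b \<Longrightarrow> sq_corners (Qm q a b p) = Tm q a b ` sq_corners p"
proof -
  assume g: "goodab a b"
  have "Tm q a b ` sq_corners p = sh (Qm q a b p) ` (off a b ` C0)"
    unfolding corners_sh image_image Tm_sh by simp
  then show ?thesis unfolding off_C0[OF g] corners_sh by simp
qed

lemma sides_map: "goodab a b \<Longrightarrow> sq_sides (Qm q a b p) = (`) (Tm q a b) ` sq_sides p"
proof -
  assume g: "goodab a b"
  have "(`) (Tm q a b) ` sq_sides p = (`) (sh (Qm q a b p)) ` ((`) (off a b) ` S0)"
    unfolding sides_sh image_image Tm_sh by simp
  then show ?thesis unfolding off_S0[OF g] sides_sh by simp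
qed

lemma inj_Tm: "goodab a b \<Longrightarrow> inj (Tm q a b)"
  unfolding goodab_def inj_def Tm_def
  by (elim disjE conjE) auto


lemma c_form:
  assumes pc: "is_PC1 c n"
  shows "\<forall>i<n. c i = Qm (c 0) (step_dir c 0) (step_dir c 1) (can i)"
proof -
  let ?a = "step_dir c 0" and ?b = "step_dir c 1"
  have st: "\<And>i. 1 \<le> i \<Longrightarrow> Suc i < n \<Longrightarrow> step_dir c i = ?b" using pc unfolding is_PC1_def by blast
  have "Suc k < n \<longrightarrow> c (Suc k) = Qm (c 0) ?a ?b (1, int k)" for k
  proof (induction k)
    case 0 show ?case by (simp add: Qm_def step_dir_def)
  next
    case (Suc k)
    show ?case
    proof
      assume k: "Suc (Suc k) < n"
      then have "c (Suc k) = Qm (c 0) ?a ?b (1, int k)" using Suc by simp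
      moreover have "step_dir c (Suc k) = ?b" using st[of "Suc k"] k by simp
      ultimately show "c (Suc (Suc k)) = Qm (c 0) ?a ?b (1, int (Suc k))"
        unfolding step_dir_def Qm_def by (simp add: prod_eq_iff algebra_simps)
    qed
  qed
  note h = this
  show ?thesis
  proof (intro allI impI)
    fix i assume i: "i < n"
    show "c i = Qm (c 0) ?a ?b (can i)"
    proof (cases i)
      case 0 then show ?thesis by (simp add: Qm_def can_def)
    next
      case (Suc k) then show ?thesis using h[of k] i by (simp add: can_def)
    qed
  qed
qed


lemma goodab_PC1:
  assumes pc: "is_PC1 c n"
  shows "goodab (step_dir c 0) (step_dir c 1)"
proof -
  let ?a = "step_dir c 0" and ?b = "step_dir c 1"
  note P = pc[unfolded is_PC1_def]
  have n3: "n \<ge> 3" using conjunct1[OF P] .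
  have inj: "inj_on c {..<n}" using conjunct1[OF conjunct2[OF P]] .
  have sd: "\<forall>i. Suc i < n \<longrightarrow> step_dir c i \<in> {(1,0),(-1,0),(0,1),(0,-1)}"
    using conjunct1[OF conjunct2[OF conjunct2[OF P]]] .
  have ab: "?a \<noteq> ?b" using not_sym[OF conjunct1[OF conjunct2[OF conjunct2[OF conjunct2[OF P]]]]] .
  have ua: "?a \<in> {(1,0),(-1,0),(0,1),(0,-1)}" using sd[rule_format, of 0] n3 by simp
  have ub: "?b \<in> {(1,0),(-1,0),(0,1),(0,-1)}" using sd[rule_format, of 1] n3 by simp
  have cf: "\<forall>i<n. c i = Qm (c 0) ?a ?b (can i)" by (rule c_form[OF pc])
  have "c 2 = Qm (c 0) ?a ?b (1,1)" using cf[rule_format, of 2] n3 by (simp add: can_def)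
  have nn: "\<not> (fst ?a = - fst ?b \<and> snd ?a = - snd ?b)"
  proof
    assume h: "fst ?a = - fst ?b \<and> snd ?a = - snd ?b"
    have "c 2 = c 0" using \<open>c 2 = _\<close> h by (simp add: Qm_def prod_eq_iff)
    moreover have "c 2 \<noteq> c 0" using inj_onD[OF inj, of 2 0] n3 by auto
    ultimately show False by simp
  qed
  show ?thesis
    using ua ub ab nn unfolding goodab_def insert_iff empty_iff by (elim disjE) simp_all
qed

lemma chain_to_can:
  assumes pc: "is_PC1 c n"
  shows "chain_V c n = Tm (c 0) (step_dir c 0) (step_dir c 1) ` Vc n"
    "chain_E c n = (`) (Tm (c 0) (step_dir c 0) (step_dir c 1)) ` Ec n"
proof -
  let ?T = "Tm (c 0) (step_dir c 0) (step_dir c 1)"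
  have g: "goodab (step_dir c 0) (step_dir c 1)" by (rule goodab_PC1[OF pc])
  have "n \<ge> 3" using pc unfolding is_PC1_def by blast
  then have n2: "n \<ge> 2" by simp
  have cf: "\<forall>i<n. c i = Qm (c 0) (step_dir c 0) (step_dir c 1) (can i)" by (rule c_form[OF pc])
  have "chain_V c n = (\<Union>i<n. ?T ` sq_corners (can i))"
    unfolding chain_V_def
  proof (rule SUP_cong[OF refl])
    fix i assume "i \<in> {..<n}"
    then have e: "c i = Qm (c 0) (step_dir c 0) (step_dir c 1) (can i)" using cf by blast
    show "sq_corners (c i) = ?T ` sq_corners (can i)"
      unfolding arg_cong[OF e, of sq_corners] by (rule corners_map[OF g])
  qed
  also have "\<dots> = ?T ` chain_V can n" unfolding chain_V_def by (simp add: image_UN)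
  finally show "chain_V c n = ?T ` Vc n" using chainV_can[OF n2] by simp
  have "chain_E c n = (\<Union>i<n. (`) ?T ` sq_sides (can i))"
    unfolding chain_E_def
  proof (rule SUP_cong[OF refl])
    fix i assume "i \<in> {..<n}"
    then have e: "c i = Qm (c 0) (step_dir c 0) (step_dir c 1) (can i)" using cf by blast
    show "sq_sides (c i) = (`) ?T ` sq_sides (can i)"
      unfolding arg_cong[OF e, of sq_sides] by (rule sides_map[OF g])
  qed
  also have "\<dots> = (`) ?T ` chain_E can n" unfolding chain_E_def by (simp add: image_UN)
  finally show "chain_E c n = (`) ?T ` Ec n" using chainE_can[OF n2] by simp
qed

theorem corollary1:
  fixes c :: "nat \<Rightarrow> int \<times> int" and n :: nat
  assumes "is_PC1 c n" and "n \<ge> 4"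
  shows "int (ZC1 (chain_V c n) (chain_E c n)) = 32 * int n - 30 - 2 * (if n = 4 then 1 else 0)
     \<and> (n \<ge> 5 \<longrightarrow> int (ZC2 (chain_V c n) (chain_E c n)) = 48 * int n - 58 - (if n = 5 then 1 else 0))"
proof -
  let ?T = "Tm (c 0) (step_dir c 0) (step_dir c 1)"
  have g: "goodab (step_dir c 0) (step_dir c 1)" by (rule goodab_PC1[OF assms(1)])
  have z1: "ZC1 (chain_V c n) (chain_E c n) = ZC1 (Vc n) (Ec n)"
    unfolding chain_to_can[OF assms(1)] by (rule ZC1_image[OF inj_Tm[OF g]])
  have z2: "ZC2 (chain_V c n) (chain_E c n) = ZC2 (Vc n) (Ec n)"
    unfolding chain_to_can[OF assms(1)] by (rule ZC2_image[OF inj_Tm[OF g]])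
  have A: "int (ZC1 (chain_V c n) (chain_E c n)) = 32 * int n - 30 - 2 * (if n = 4 then 1 else 0)"
  proof (cases "n = 4")
    case True
    then show ?thesis unfolding z1 using ZC1_can[OF assms(2)] P1_4 P2[of 4] by simp
  next
    case False
    then have "n \<ge> 5" using assms(2) by simp
    then show ?thesis unfolding z1 using ZC1_can[OF assms(2)] P1 P2[OF assms(2)] False by simp
  qed
  have B: "int (ZC2 (chain_V c n) (chain_E c n)) = 48 * int n - 58 - (if n = 5 then 1 else 0)" if n5: "n \<ge> 5"
  proof (cases "n = 5")
    case True
    then show ?thesis unfolding z2 using ZC2_can[OF assms(2)] PH[of 5] PL_5 PR[of 5] by simp
  next
    case False
    then have "n \<ge> 6" using n5 by simp
    then show ?thesis unfolding z2 using ZC2_can[OF assms(2)] PH[OF n5] PL PR[OF n5] False by simp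
  qed
  show ?thesis using A B by blast
qed

end
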